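(* Let $S = R\cup B$ be a finite set of points in the plane in general position (no three collinear), colored red ($R$) and blue ($B$). If there are $a,b\in R$ and $c,d\in B$ such that the segments $\overline{ab}$ and $\overline{cd}$ intersect, then $S$ contains a balanced convex $4$-hole.
   Context: A $4$-hole of $S$ is a simple quadrilateral with vertices in $S$ and no point of $S$ in its interior; it is convex if the quadrilateral is convex, and balanced if it has exactly two red and two blue vertices. *)

theory Defs
  imports "HOL-Analysis.Analysis"
begin

definition general_position :: "(real^2) set \<Rightarrow> bool" where
  "general_position S \<longleftrightarrow>
     (\<forall>x\<in>S. \<forall>y\<in>S. \<forall>z\<in>S. x \<noteq> y \<and> y \<noteq> z \<and> x \<noteq> z \<longrightarrow> \<not> collinear {x, y, z})"

definition convex_position :: "(real^2) set \<Rightarrow> bool" where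
  "convex_position Q \<longleftrightarrow> (\<forall>p\<in>Q. p \<notin> convex hull (Q - {p}))"

definition convex_4hole :: "(real^2) set \<Rightarrow> (real^2) set \<Rightarrow> bool" where
  "convex_4hole S Q \<longleftrightarrow> Q \<subseteq> S \<and> card Q = 4 \<and> convex_position Q \<and>
      S \<inter> interior (convex hull Q) = {}"

definition balanced_convex_4hole :: "(real^2) set \<Rightarrow> (real^2) set \<Rightarrow> (real^2) set \<Rightarrow> bool" where
  "balanced_convex_4hole R B Q \<longleftrightarrow> convex_4hole (R \<union> B) Q \<and>
      card (Q \<inter> R) = 2 \<and> card (Q \<inter> B) = 2"

end

theory Submission
  imports Defs
begin

definition det2 :: "real^2 \<Rightarrow> real^2 \<Rightarrow> real" where
  "det2 u v = u$1 * v$2 - u$2 * v$1"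

definition crd1 :: "real^2 \<Rightarrow> real^2 \<Rightarrow> real^2 \<Rightarrow> real^2 \<Rightarrow> real" where
  "crd1 m e1 e2 x = det2 (x - m) e2 / det2 e1 e2"
definition crd2 :: "real^2 \<Rightarrow> real^2 \<Rightarrow> real^2 \<Rightarrow> real^2 \<Rightarrow> real" where
  "crd2 m e1 e2 x = det2 e1 (x - m) / det2 e1 e2"

lemma det2_lin1: "det2 (p *\<^sub>R x + q *\<^sub>R y) z = p * det2 x z + q * det2 y z"
  by (simp add: det2_def algebra_simps)
lemma det2_lin2: "det2 z (p *\<^sub>R x + q *\<^sub>R y) = p * det2 z x + q * det2 z y"
  by (simp add: det2_def algebra_simps)
lemma det2_self: "det2 x x = 0" by (simp add: det2_def)
lemma det2_anti: "det2 x y = - det2 y x" by (simp add: det2_def)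

lemma crd_lin:
  assumes "det2 e1 e2 \<noteq> 0"
  shows "crd1 m e1 e2 (m + p *\<^sub>R e1 + q *\<^sub>R e2) = p"
    and "crd2 m e1 e2 (m + p *\<^sub>R e1 + q *\<^sub>R e2) = q"
proof -
  have e: "m + p *\<^sub>R e1 + q *\<^sub>R e2 - m = p *\<^sub>R e1 + q *\<^sub>R e2" by simp
  have a: "det2 e2 e1 = - det2 e1 e2" by (rule det2_anti)
  show "crd1 m e1 e2 (m + p *\<^sub>R e1 + q *\<^sub>R e2) = p"
    using assms unfolding crd1_def e det2_lin1 det2_self by simp
  show "crd2 m e1 e2 (m + p *\<^sub>R e1 + q *\<^sub>R e2) = q"
    using assms unfolding crd2_def e det2_lin2 det2_self by simp
qed

lemma crd_decomp:
  assumes D: "det2 e1 e2 \<noteq> 0"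
  shows "x = m + crd1 m e1 e2 x *\<^sub>R e1 + crd2 m e1 e2 x *\<^sub>R e2"
proof -
  have h: "det2 e1 e2 * (x - m)$i = det2 (x - m) e2 * e1$i + det2 e1 (x - m) * e2$i" for i
  proof -
    have "i = 1 \<or> i = 2" using exhaust_2 by blast
    thus ?thesis by (auto simp: det2_def algebra_simps)
  qed
  have "(x - m)$i = crd1 m e1 e2 x * e1$i + crd2 m e1 e2 x * e2$i" for i
    using h[of i] D unfolding crd1_def crd2_def by (simp add: field_simps)
  hence "x - m = crd1 m e1 e2 x *\<^sub>R e1 + crd2 m e1 e2 x *\<^sub>R e2" by (simp add: vec_eq_iff)
  thus ?thesis by (simp add: algebra_simps)
qed

lemma crd_aff:
  "crd1 m e1 e2 ((1 - u) *\<^sub>R x + u *\<^sub>R y) = (1-u) * crd1 m e1 e2 x + u * crd1 m e1 e2 y"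
  "crd2 m e1 e2 ((1 - u) *\<^sub>R x + u *\<^sub>R y) = (1-u) * crd2 m e1 e2 x + u * crd2 m e1 e2 y"
proof -
  have e: "(1 - u) *\<^sub>R x + u *\<^sub>R y - m = (1 - u) *\<^sub>R (x - m) + u *\<^sub>R (y - m)"
    by (simp add: algebra_simps)
  show "crd1 m e1 e2 ((1 - u) *\<^sub>R x + u *\<^sub>R y) = (1-u) * crd1 m e1 e2 x + u * crd1 m e1 e2 y"
    unfolding crd1_def e det2_lin1 by (simp add: add_divide_distrib)
  show "crd2 m e1 e2 ((1 - u) *\<^sub>R x + u *\<^sub>R y) = (1-u) * crd2 m e1 e2 x + u * crd2 m e1 e2 y"
    unfolding crd2_def e det2_lin2 by (simp add: add_divide_distrib)
qed

lemma interior_crd1: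
  assumes D: "det2 e1 e2 \<noteq> 0" and S: "S \<subseteq> {x. crd1 m e1 e2 x \<ge> k}"
  shows "interior S \<subseteq> {x. crd1 m e1 e2 x > k}"
proof -
  define w :: "real^2" where "w = (\<chi> i. if i = 1 then e2$2 / det2 e1 e2 else - e2$1 / det2 e1 e2)"
  have eq: "crd1 m e1 e2 x = w \<bullet> x - w \<bullet> m" for x
    by (simp add: w_def crd1_def det2_def inner_vec_def sum_2 diff_divide_distrib add_divide_distrib algebra_simps)
  have w0: "w \<noteq> 0"
  proof
    assume "w = 0"
    hence "e2$2 = 0" "e2$1 = 0" using D unfolding w_def vec_eq_iff forall_2 by auto
    thus False using D by (simp add: det2_def)
  qed
  have "S \<subseteq> {x. w \<bullet> x \<ge> k + w \<bullet> m}" using S eq by force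
  hence "interior S \<subseteq> interior {x. w \<bullet> x \<ge> k + w \<bullet> m}" by (rule interior_mono)
  also have "\<dots> = {x. w \<bullet> x > k + w \<bullet> m}" using w0 by simp
  finally show ?thesis using eq by force
qed

lemma convex_crd_ge: "convex {x. al * crd1 m e1 e2 x + be * crd2 m e1 e2 x \<ge> k}"
proof (unfold convex_alt, clarsimp)
  fix x y :: "real^2" and u :: real
  assume h: "k \<le> al * crd1 m e1 e2 x + be * crd2 m e1 e2 x" "k \<le> al * crd1 m e1 e2 y + be * crd2 m e1 e2 y"
    "0 \<le> u" "u \<le> 1"
  have "(1-u) * k \<le> (1-u) * (al * crd1 m e1 e2 x + be * crd2 m e1 e2 x)" using h by (intro mult_left_mono) auto
  moreover have "u * k \<le> u * (al * crd1 m e1 e2 y + be * crd2 m e1 e2 y)" using h by (intro mult_left_mono) auto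
  ultimately show "k \<le> al * crd1 m e1 e2 ((1 - u) *\<^sub>R x + u *\<^sub>R y) + be * crd2 m e1 e2 ((1 - u) *\<^sub>R x + u *\<^sub>R y)"
    unfolding crd_aff by (simp add: algebra_simps)
qed

lemma convex_crd_gt: "convex {x. al * crd1 m e1 e2 x + be * crd2 m e1 e2 x > k}"
proof (unfold convex_alt, clarsimp)
  fix x y :: "real^2" and u :: real
  assume h: "k < al * crd1 m e1 e2 x + be * crd2 m e1 e2 x" "k < al * crd1 m e1 e2 y + be * crd2 m e1 e2 y"
    "0 \<le> u" "u \<le> 1"
  show "k < al * crd1 m e1 e2 ((1 - u) *\<^sub>R x + u *\<^sub>R y) + be * crd2 m e1 e2 ((1 - u) *\<^sub>R x + u *\<^sub>R y)"
  proof (cases "u = 0")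
    case True then show ?thesis using h by simp
  next
    case False
    have "(1-u) * k \<le> (1-u) * (al * crd1 m e1 e2 x + be * crd2 m e1 e2 x)" using h by (intro mult_left_mono) auto
    moreover have "u * k < u * (al * crd1 m e1 e2 y + be * crd2 m e1 e2 y)" using h False by (intro mult_strict_left_mono) auto
    ultimately show ?thesis unfolding crd_aff by (simp add: algebra_simps)
  qed
qed

lemma col2:
  assumes "x = m + k1 *\<^sub>R e" "y = m + k2 *\<^sub>R e" "z = m + k3 *\<^sub>R e"
  shows "collinear {x, y, z}"
  unfolding collinear_def
proof (rule exI[of _ e], intro ballI)
  fix p q assume "p \<in> {x,y,z}" "q \<in> {x,y,z}"
  then obtain i j where "p = m + i *\<^sub>R e" "q = m + j *\<^sub>R e" using assms by blast
  hence "p - q = (i - j) *\<^sub>R e" by (simp add: algebra_simps)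
  thus "\<exists>c. p - q = c *\<^sub>R e" by blast
qed

lemma det0_par:
  assumes "det2 e1 e2 = 0" "e1 \<noteq> 0"
  shows "\<exists>k. e2 = k *\<^sub>R e1"
proof (cases "e1$1 = 0")
  case False
  show ?thesis
    by (rule exI[of _ "e2$1 / e1$1"]) (use assms False in \<open>auto simp: vec_eq_iff forall_2 det2_def field_simps\<close>)
next
  case True
  with assms have "e1$2 \<noteq> 0" by (auto simp: vec_eq_iff forall_2)
  show ?thesis
    by (rule exI[of _ "e2$2 / e1$2"]) (use assms True \<open>e1$2 \<noteq> 0\<close> in \<open>auto simp: vec_eq_iff forall_2 det2_def field_simps\<close>)
qed

definition cfg where
  "cfg a b c d m e1 e2 l u \<longleftrightarrow> a = m - l *\<^sub>R e1 \<and> b = m + e1 \<and> c = m - u *\<^sub>R e2 \<and> d = m + e2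
     \<and> l > 0 \<and> u > 0 \<and> det2 e1 e2 \<noteq> (0::real)"

lemma cfg_vals:
  assumes "cfg a b c d m e1 e2 l u"
  shows "crd1 m e1 e2 a = - l" "crd2 m e1 e2 a = 0" "crd1 m e1 e2 b = 1" "crd2 m e1 e2 b = 0"
    "crd1 m e1 e2 c = 0" "crd2 m e1 e2 c = - u" "crd1 m e1 e2 d = 0" "crd2 m e1 e2 d = 1"
proof -
  have D: "det2 e1 e2 \<noteq> 0" using assms by (simp add: cfg_def)
  have "a = m + (-l) *\<^sub>R e1 + 0 *\<^sub>R e2" "b = m + 1 *\<^sub>R e1 + 0 *\<^sub>R e2"
    "c = m + 0 *\<^sub>R e1 + (-u) *\<^sub>R e2" "d = m + 0 *\<^sub>R e1 + 1 *\<^sub>R e2" using assms by (simp_all add: cfg_def)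
  thus "crd1 m e1 e2 a = - l" "crd2 m e1 e2 a = 0" "crd1 m e1 e2 b = 1" "crd2 m e1 e2 b = 0"
    "crd1 m e1 e2 c = 0" "crd2 m e1 e2 c = - u" "crd1 m e1 e2 d = 0" "crd2 m e1 e2 d = 1"
    using crd_lin[OF D] by metis+
qed

lemma cfg_perm1:
  assumes "cfg a b c d m e1 e2 l u"
  shows "cfg b a c d m (- l *\<^sub>R e1) e2 (1/l) u"
  using assms unfolding cfg_def by (auto simp: det2_def algebra_simps)

lemma cfg_perm2:
  assumes "cfg a b c d m e1 e2 l u"
  shows "cfg c d a b m e2 e1 u l"
  using assms unfolding cfg_def by (auto simp: det2_def algebra_simps)

lemma Vx:
  assumes cf: "cfg a b c d m e1 e2 l u"
  shows "a \<notin> convex hull {b,c,d}" "a \<notin> interior (convex hull {a,b,c,d})"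
proof -
  have D: "det2 e1 e2 \<noteq> 0" and l: "l > 0" using cf by (auto simp: cfg_def)
  note v = cfg_vals[OF cf]
  have c0: "convex {x. crd1 m e1 e2 x \<ge> k}" for k using convex_crd_ge[where al=1 and be=0 and k=k] by simp
  have "convex hull {b,c,d} \<subseteq> {x. crd1 m e1 e2 x \<ge> 0}"
    by (rule hull_minimal) (use v c0 in auto)
  thus "a \<notin> convex hull {b,c,d}" using v l by force
  have "convex hull {a,b,c,d} \<subseteq> {x. crd1 m e1 e2 x \<ge> -l}"
    by (rule hull_minimal) (use v c0 l in auto)
  from interior_crd1[OF D this] show "a \<notin> interior (convex hull {a,b,c,d})" using v by force
qed

lemma Step:
  assumes cf: "cfg a b c d m e1 e2 l u" and p: "p \<in> interior (convex hull {a,b,c,d})"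
    and neg: "crd1 m e1 e2 p < 0"
  shows "closed_segment p b \<inter> closed_segment c d \<noteq> {}"
    "convex hull {p,b,c,d} \<subseteq> convex hull {a,b,c,d}" "a \<notin> convex hull {p,b,c,d}"
proof -
  have D: "det2 e1 e2 \<noteq> 0" and l: "l > 0" and u: "u > 0" and cd: "c = m - u *\<^sub>R e2" "d = m + e2"
    using cf by (auto simp: cfg_def)
  note v = cfg_vals[OF cf]
  define H where "H = convex hull {a,b,c,d}"
  define X where "X = crd1 m e1 e2 p"
  define Y where "Y = crd2 m e1 e2 p"
  have c0: "convex {x. crd1 m e1 e2 x \<ge> k}" for k using convex_crd_ge[where al=1 and be=0 and k=k] by simp
  have c0': "convex {x. crd1 m e1 e2 x > k}" for k using convex_crd_gt[where al=1 and be=0 and k=k] by simp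
  have pH: "p \<in> H" using p interior_subset H_def by blast
  have "H \<subseteq> {x. crd1 m e1 e2 x \<ge> -l}" unfolding H_def
    by (rule hull_minimal) (use v c0 l in auto)
  from interior_crd1[OF D this] p have Xl: "X > -l" unfolding X_def H_def by blast
  have lu: "l * u > 0" using l u by simp
  hence lu': "-l \<le> l*u" "- (l*u) \<le> u" "- (l*u) \<le> l" using l u by linarith+
  have "H \<subseteq> {x. 1 * crd1 m e1 e2 x + (-l) * crd2 m e1 e2 x \<ge> -l}" unfolding H_def
    apply (rule hull_minimal)
     apply (use v l u lu' in simp)
    by (rule convex_crd_ge)
  with pH have h1: "X - l * Y \<ge> -l" unfolding X_def Y_def by auto
  have "H \<subseteq> {x. u * crd1 m e1 e2 x + l * crd2 m e1 e2 x \<ge> -l*u}" unfolding H_def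
    apply (rule hull_minimal)
     apply (use v l u lu' in simp)
    by (rule convex_crd_ge)
  with pH have h2: "u * X + l * Y \<ge> -l*u" unfolding X_def Y_def by auto
  have X0: "X < 0" using neg X_def by simp
  have "l * Y \<le> l * 1" using h1 X0 by linarith
  hence Y1: "Y \<le> 1" using l by simp
  have "u * X < 0" using X0 u by (simp add: mult_pos_neg)
  hence "l * Y \<ge> l * (-u)" using h2 by linarith
  hence Yu: "Y \<ge> -u" using l by (metis mult_le_cancel_left_pos)
  define r where "r = - X / (1 - X)"
  have r0: "0 < r" "r < 1" using X0 unfolding r_def by (auto simp: field_simps)
  define q where "q = (1 - r) *\<^sub>R p + r *\<^sub>R b"
  have q1: "crd1 m e1 e2 q = 0" unfolding q_def crd_aff using v X0
    by (simp add: X_def[symmetric] r_def field_simps)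
  have q2: "crd2 m e1 e2 q = (1 - r) * Y" unfolding q_def crd_aff using v by (simp add: Y_def)
  have qa: "(1 - r) * Y \<le> 1"
  proof -
    have "(1 - r) * Y \<le> (1 - r) * 1" using Y1 r0 by (intro mult_left_mono) auto
    thus ?thesis using r0 by (smt (verit))
  qed
  have qb: "(1 - r) * Y \<ge> -u"
  proof (cases "Y \<ge> 0")
    case True thus ?thesis using r0 u by (smt (verit) mult_nonneg_nonneg)
  next
    case False
    have "(1 - r) * Y \<ge> 1 * Y" using False r0 by (intro mult_right_mono_neg) auto
    thus ?thesis using Yu by linarith
  qed
  define tau where "tau = ((1 - r) * Y + u) / (1 + u)"
  have tau: "0 \<le> tau" "tau \<le> 1" using qa qb u unfolding tau_def by (auto simp: field_simps)
  have "q = m + 0 *\<^sub>R e1 + ((1 - r) * Y) *\<^sub>R e2" using crd_decomp[OF D, of q m] q1 q2 by simp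
  also have "\<dots> = (1 - tau) *\<^sub>R c + tau *\<^sub>R d"
  proof -
    have tt: "tau * (1 + u) = (1 - r) * Y + u" using u unfolding tau_def by simp
    have "(1 - r) * Y = (1 - tau) * (-u) + tau" using tt by (simp add: algebra_simps)
    hence "m + 0 *\<^sub>R e1 + ((1 - r) * Y) *\<^sub>R e2 = m + ((1 - tau) * (-u) + tau) *\<^sub>R e2" by simp
    also have "\<dots> = (1 - tau) *\<^sub>R c + tau *\<^sub>R d" unfolding cd by (simp add: algebra_simps)
    finally show ?thesis .
  qed
  finally have "q \<in> closed_segment c d" using tau unfolding in_segment by blast
  moreover have "q \<in> closed_segment p b" using r0 unfolding in_segment q_def by (intro exI[of _ r]) auto
  ultimately show "closed_segment p b \<inter> closed_segment c d \<noteq> {}" by blast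
  show "convex hull {p,b,c,d} \<subseteq> convex hull {a,b,c,d}"
    by (rule hull_minimal) (use pH H_def hull_subset[of "{a,b,c,d}" convex] in \<open>auto simp: convex_convex_hull\<close>)
  have "convex hull {p,b,c,d} \<subseteq> {x. crd1 m e1 e2 x > -l}"
    by (rule hull_minimal) (use v c0' l Xl X_def in auto)
  thus "a \<notin> convex hull {p,b,c,d}" using v by force
qed

lemma seg_col:
  assumes "y \<in> closed_segment c d" "y \<noteq> c" "y \<noteq> d"
  shows "c \<noteq> d \<and> collinear {y, c, d}"
proof -
  obtain t where t: "y = (1 - t) *\<^sub>R c + t *\<^sub>R d" using assms(1) unfolding in_segment by blast
  have "c \<noteq> d" using t assms by (auto simp: algebra_simps)
  moreover have "collinear {y, c, d}"
    by (rule col2[of _ c t "d - c" _ 0 _ 1]) (use t in \<open>auto simp: algebra_simps\<close>)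
  ultimately show ?thesis by blast
qed

lemma Derive:
  assumes gp: "general_position (R \<union> B)" and RB: "R \<inter> B = {}"
    and ab: "a \<in> R" "b \<in> R" and cd: "c \<in> B" "d \<in> B"
    and x: "x \<in> closed_segment a b" "x \<in> closed_segment c d"
  shows "\<exists>m e1 e2 l u. cfg a b c d m e1 e2 l u"
proof -
  have ncol: "\<not> collinear {p, q, z}" if "p \<in> R \<union> B" "q \<in> R \<union> B" "z \<in> R \<union> B" "p \<noteq> q" "q \<noteq> z" "p \<noteq> z" for p q z
    using gp that unfolding general_position_def by blast
  have ne: "a \<noteq> c" "a \<noteq> d" "b \<noteq> c" "b \<noteq> d" using RB ab cd by auto
  obtain s where s: "0 \<le> s" "s \<le> 1" "x = (1 - s) *\<^sub>R a + s *\<^sub>R b" using x(1) unfolding in_segment by blast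
  obtain t where t: "0 \<le> t" "t \<le> 1" "x = (1 - t) *\<^sub>R c + t *\<^sub>R d" using x(2) unfolding in_segment by blast
  have xa: "x \<noteq> a"
  proof
    assume "x = a"
    with seg_col[of a c d] x ne have "c \<noteq> d" "collinear {a, c, d}" by auto
    thus False using ncol[of a c d] ab cd ne by auto
  qed
  have xb: "x \<noteq> b"
  proof
    assume "x = b"
    with seg_col[of b c d] x ne have "c \<noteq> d" "collinear {b, c, d}" by auto
    thus False using ncol[of b c d] ab cd ne by auto
  qed
  have xc: "x \<noteq> c"
  proof
    assume "x = c"
    with seg_col[of c a b] x ne have "a \<noteq> b" "collinear {c, a, b}" by auto
    thus False using ncol[of c a b] ab cd ne by auto
  qed
  have xd: "x \<noteq> d"
  proof
    assume "x = d"
    with seg_col[of d a b] x ne have "a \<noteq> b" "collinear {d, a, b}" by auto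
    thus False using ncol[of d a b] ab cd ne by auto
  qed
  have s0: "s \<noteq> 0" "s \<noteq> 1" using s xa xb by auto
  have t0: "t \<noteq> 0" "t \<noteq> 1" using t xc xd by auto
  define e1 where "e1 = b - x"
  define e2 where "e2 = d - x"
  define l where "l = s / (1 - s)"
  define u where "u = t / (1 - t)"
  have e1': "e1 = (1 - s) *\<^sub>R (b - a)" unfolding e1_def s(3) by (simp add: algebra_simps)
  have e2': "e2 = (1 - t) *\<^sub>R (d - c)" unfolding e2_def t(3) by (simp add: algebra_simps)
  have "l *\<^sub>R e1 = s *\<^sub>R (b - a)" unfolding e1' l_def using s0 by simp
  hence A: "a = x - l *\<^sub>R e1" unfolding s(3) by (simp add: algebra_simps)
  have "u *\<^sub>R e2 = t *\<^sub>R (d - c)" unfolding e2' u_def using t0 by simp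
  hence C: "c = x - u *\<^sub>R e2" unfolding t(3) by (simp add: algebra_simps)
  have l0: "l > 0" unfolding l_def using s s0 by auto
  have u0: "u > 0" unfolding u_def using t t0 by auto
  have D: "det2 e1 e2 \<noteq> 0"
  proof
    assume "det2 e1 e2 = 0"
    moreover have "e1 \<noteq> 0" using xb e1_def by auto
    ultimately obtain k where k: "e2 = k *\<^sub>R e1" using det0_par by blast
    have "collinear {a, b, d}"
      by (rule col2[of _ x "-l" e1 _ 1 _ k]) (use A k e1_def e2_def in \<open>auto simp: algebra_simps\<close>)
    moreover have "a \<noteq> b" using s(3) xa by (auto simp: algebra_simps)
    ultimately show False using ncol[of a b d] ab cd ne by auto
  qed
  have "cfg a b c d x e1 e2 l u" unfolding cfg_def using A C D l0 u0 e1_def e2_def by auto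
  thus ?thesis by blast
qed

lemma crd_scale1: "crd1 m (k *\<^sub>R e1) e2 x = crd1 m e1 e2 x / k"
  unfolding crd1_def by (simp add: det2_def algebra_simps)

lemma crd_swap: "crd1 m e2 e1 x = crd2 m e1 e2 x"
  unfolding crd1_def crd2_def by (simp add: det2_def algebra_simps divide_simps)

lemma Main_ind:
  assumes fin: "finite R" "finite B" and RB: "R \<inter> B = {}" and gp: "general_position (R \<union> B)"
  shows "a \<in> R \<Longrightarrow> b \<in> R \<Longrightarrow> c \<in> B \<Longrightarrow> d \<in> B \<Longrightarrow>
    closed_segment a b \<inter> closed_segment c d \<noteq> {} \<Longrightarrow>
    card ((R \<union> B) \<inter> convex hull {a,b,c,d}) = n \<Longrightarrow> \<exists>Q. balanced_convex_4hole R B Q"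
proof (induction n arbitrary: a b c d rule: less_induct)
  case (less n a b c d)
  define S where "S = R \<union> B"
  define H where "H = convex hull {a,b,c,d}"
  have finS: "finite S" using fin S_def by simp
  have ncol: "\<not> collinear {p, q, z}" if "p \<in> S" "q \<in> S" "z \<in> S" "p \<noteq> q" "q \<noteq> z" "p \<noteq> z" for p q z
    using gp that unfolding general_position_def S_def by blast
  obtain m e1 e2 l u where cf: "cfg a b c d m e1 e2 l u"
    using Derive[OF gp RB less.prems(1-4)] less.prems(5) by blast
  have D: "det2 e1 e2 \<noteq> 0" and cA: "a = m - l *\<^sub>R e1" and cB: "b = m + e1"
    and cC: "c = m - u *\<^sub>R e2" and cD: "d = m + e2" using cf by (auto simp: cfg_def)
  have cf1: "cfg b a c d m (- l *\<^sub>R e1) e2 (1/l) u" by (rule cfg_perm1[OF cf])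
  have cf2: "cfg c d a b m e2 e1 u l" by (rule cfg_perm2[OF cf])
  have cf3: "cfg d c a b m (- u *\<^sub>R e2) e1 (1/u) l" by (rule cfg_perm1[OF cf2])
  have s1: "{b,a,c,d} = {a,b,c,d}" "{c,d,a,b} = {a,b,c,d}" "{d,c,a,b} = {a,b,c,d}" by auto
  note V0 = Vx[OF cf] and V1 = Vx[OF cf1, unfolded s1] and V2 = Vx[OF cf2, unfolded s1] and V3 = Vx[OF cf3, unfolded s1]
  have dist: "a \<noteq> b" "a \<noteq> c" "a \<noteq> d" "b \<noteq> c" "b \<noteq> d" "c \<noteq> d"
    using V0(1) V1(1) V2(1) hull_subset[of "{b,c,d}" convex] hull_subset[of "{a,c,d}" convex]
      hull_subset[of "{d,a,b}" convex] by auto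
  have smaller: "\<exists>Q. balanced_convex_4hole R B Q"
    if h: "a' \<in> R" "b' \<in> R" "c' \<in> B" "d' \<in> B" "closed_segment a' b' \<inter> closed_segment c' d' \<noteq> {}"
       "convex hull {a',b',c',d'} \<subseteq> H" "v \<in> S" "v \<in> H" "v \<notin> convex hull {a',b',c',d'}"
     for a' b' c' d' v
  proof -
    have "S \<inter> convex hull {a',b',c',d'} \<subset> S \<inter> H" using h by blast
    hence "card (S \<inter> convex hull {a',b',c',d'}) < card (S \<inter> H)" using finS by (intro psubset_card_mono) auto
    hence "card (S \<inter> convex hull {a',b',c',d'}) < n" using less.prems(6) S_def H_def by simp
    from less.IH[OF this h(1-5)] show ?thesis using S_def by simp
  qed
  show ?case
  proof (cases "S \<inter> interior H = {}")
    case True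
    define Q where "Q = {a,b,c,d}"
    have "Q - {a} = {b,c,d}" "Q - {b} = {a,c,d}" "Q - {c} = {d,a,b}" "Q - {d} = {c,a,b}"
      using dist unfolding Q_def by auto
    hence cp: "convex_position Q" unfolding convex_position_def using V0(1) V1(1) V2(1) V3(1)
      unfolding Q_def by auto
    have "card Q = 4" using dist unfolding Q_def by auto
    moreover have "Q \<subseteq> R \<union> B" using less.prems Q_def by auto
    moreover have "Q \<inter> R = {a,b}" using less.prems RB Q_def by auto
    moreover have "Q \<inter> B = {c,d}" using less.prems RB Q_def by auto
    ultimately have "balanced_convex_4hole R B Q"
      unfolding balanced_convex_4hole_def convex_4hole_def using cp True dist S_def H_def Q_def by auto
    thus ?thesis by blast
  next
    case False
    then obtain p where pS: "p \<in> S" and pI: "p \<in> interior H" by blast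
    have pH: "p \<in> H" using pI interior_subset by blast
    have pd: "p \<noteq> a" "p \<noteq> b" "p \<noteq> c" "p \<noteq> d" using pI V0(2) V1(2) V2(2) V3(2) H_def by auto
    have aH: "a \<in> H" "b \<in> H" "c \<in> H" "d \<in> H" using hull_subset[of "{a,b,c,d}" convex] H_def by auto
    have inS: "a \<in> S" "b \<in> S" "c \<in> S" "d \<in> S" using less.prems S_def by auto
    note dec = crd_decomp[OF D, of p m]
    show ?thesis
    proof (cases "p \<in> R")
      case True
      have nz: "crd1 m e1 e2 p \<noteq> 0"
      proof
        assume z: "crd1 m e1 e2 p = 0"
        have "collinear {p, c, d}"
          by (rule col2[of _ m "crd2 m e1 e2 p" e2 _ "-u" _ 1]) (use dec z cC cD in auto)
        thus False using ncol[of p c d] pS inS pd dist by auto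
      qed
      show ?thesis
      proof (cases "crd1 m e1 e2 p < 0")
        case True
        note st = Step[OF cf pI[unfolded H_def] True]
        show ?thesis by (rule smaller[of p b c d a]) (use st less.prems \<open>p \<in> R\<close> aH inS H_def in auto)
      next
        case False
        hence "crd1 m (- l *\<^sub>R e1) e2 p < 0" using nz cf unfolding crd_scale1 cfg_def
          by (auto simp: divide_less_0_iff)
        note st = Step[OF cf1 pI[unfolded H_def s1(1)[symmetric]] this, unfolded s1]
        show ?thesis by (rule smaller[of p a c d b]) (use st less.prems \<open>p \<in> R\<close> aH inS H_def in auto)
      qed
    next
      case False
      hence pB: "p \<in> B" using pS S_def by auto
      have nz: "crd2 m e1 e2 p \<noteq> 0"
      proof
        assume z: "crd2 m e1 e2 p = 0"
        have "collinear {p, a, b}"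
          by (rule col2[of _ m "crd1 m e1 e2 p" e1 _ "-l" _ 1]) (use dec z cA cB in auto)
        thus False using ncol[of p a b] pS inS pd dist by auto
      qed
      show ?thesis
      proof (cases "crd2 m e1 e2 p < 0")
        case True
        hence "crd1 m e2 e1 p < 0" by (simp add: crd_swap)
        note st = Step[OF cf2 pI[unfolded H_def s1(2)[symmetric]] this, unfolded s1]
        have e: "{p,d,a,b} = {a,b,p,d}" by auto
        show ?thesis by (rule smaller[of a b p d c]) (use st less.prems pB aH inS H_def e in auto)
      next
        case False
        have eq: "crd1 m ((- u) *\<^sub>R e2) e1 p = crd2 m e1 e2 p / (- u)"
          unfolding crd_scale1 by (simp only: crd_swap)
        have "crd2 m e1 e2 p / (- u) < 0" using False nz cf unfolding cfg_def
          by (auto simp: divide_less_0_iff)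
        hence "crd1 m (- u *\<^sub>R e2) e1 p < 0" using eq by simp
        note st = Step[OF cf3 pI[unfolded H_def s1(3)[symmetric]] this, unfolded s1]
        have e: "{p,c,a,b} = {a,b,p,c}" by auto
        show ?thesis by (rule smaller[of a b p c d]) (use st less.prems pB aH inS H_def e in auto)
      qed
    qed
  qed
qed

theorem lemma4:
  fixes R B :: "(real^2) set" and a b c d :: "real^2"
  assumes "finite R" and "finite B" and "R \<inter> B = {}"
    and "general_position (R \<union> B)"
    and "a \<in> R" and "b \<in> R" and "c \<in> B" and "d \<in> B"
    and "closed_segment a b \<inter> closed_segment c d \<noteq> {}"
  shows "\<exists>Q. balanced_convex_4hole R B Q"
  using Main_ind[OF assms(1-4) assms(5-9) refl] .

end
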